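(* Let $b\in\mathbb{R}$, $c>0$, $n\in\mathbb{N}$, and $R_b(x)=\sum_{i=1}^n x_i\ln x_i+b\sum_{i=1}^n x_i$ for $x\in[0,+\infty)^n$ (with $0\ln0=0$). If $b+\ln c-\ln n>1$, then $$\mathrm{Vol}\big(\{x\in[0,+\infty)^n: R_b(x)<c\}\big)\le\frac{1}{n!\,n}\cdot\frac{2^nc^n}{(b+\ln c-\ln n)^n}.$$ *)

theory Defs
  imports "HOL-Analysis.Analysis"
begin

definition xlnx :: "real \<Rightarrow> real" where
  "xlnx t = (if t = 0 then 0 else t * ln t)"

definition Rb :: "real \<Rightarrow> real ^ 'n \<Rightarrow> real" where
  "Rb b x = (\<Sum>i\<in>UNIV. xlnx (x $ i)) + b * (\<Sum>i\<in>UNIV. x $ i)"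

end

theory Submission
  imports Defs
begin

lemma simplex_vol:
  fixes s :: real assumes "s \<ge> 0"
  shows "emeasure lborel {x::'a::euclidean_space. (\<forall>i\<in>Basis. 0 \<le> x \<bullet> i) \<and> sum ((\<bullet>) x) Basis \<le> s} =
     ennreal (s ^ DIM('a) / fact DIM('a))"
proof -
  have "emeasure lborel {x::'a. (\<forall>i\<in>Basis. 0 \<le> x \<bullet> i) \<and> sum ((\<bullet>) x) Basis \<le> s} =
               emeasure (distr (Pi\<^sub>M Basis (\<lambda>b. lborel)) borel (\<lambda>f. \<Sum>b\<in>Basis. f b *\<^sub>R b))
                 {x::'a. (\<forall>i\<in>Basis. 0 \<le> x \<bullet> i) \<and> sum ((\<bullet>) x) Basis \<le> s}"
    by (subst lborel_eq) simp
  also have "\<dots> = emeasure (Pi\<^sub>M Basis (\<lambda>b. lborel))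
                    ({y::'a \<Rightarrow> real. (\<forall>i\<in>Basis. 0 \<le> y i) \<and> sum y Basis \<le> s} \<inter>
                      space (Pi\<^sub>M Basis (\<lambda>b. lborel)))"
    by (subst emeasure_distr) auto
  also have "\<dots> = ennreal (s ^ DIM('a) / fact DIM('a))"
    using assms by (subst emeasure_std_simplex_aux) (auto simp: ennreal_power ennreal_fact divide_ennreal)
  finally show ?thesis .
qed

lemma xlnx_bound:
  fixes y a :: real assumes "y \<ge> 0" "a > 0"
  shows "xlnx y \<ge> y * ln a + y - a"
proof (cases "y = 0")
  case True thus ?thesis using assms by (simp add: xlnx_def)
next
  case False
  hence y: "y > 0" using assms by simp
  have "ln (a / y) \<le> a / y - 1" using y assms by (intro ln_le_minus_one) simp
  hence "ln a - ln y \<le> a / y - 1" using y assms by (simp add: ln_div)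
  hence "y * (ln a - ln y) \<le> y * (a / y - 1)" using y by (intro mult_left_mono) auto
  hence "y * ln a - y * ln y \<le> a - y" using y by (simp add: algebra_simps)
  thus ?thesis using False by (simp add: xlnx_def)
qed

lemma pow_bound: "n \<ge> 1 \<Longrightarrow> real n \<le> (29/20) ^ n"
proof (induction n rule: nat_induct_at_least)
  case base then show ?case by simp
next
  case (Suc n)
  show ?case
  proof (cases "n \<le> 2")
    case True
    then have "n = 1 \<or> n = 2" using Suc by auto
    then show ?thesis by (auto simp: numeral_eq_Suc)
  next
    case False
    have "real (Suc n) \<le> 29/20 * real n" using False by simp
    also have "\<dots> \<le> 29/20 * (29/20)^n" using Suc.IH by simp
    finally show ?thesis by simp
  qed
qed

lemma key_ineq:
  fixes L t :: real assumes "L > 0" "1 \<le> t" "t \<le> 29/20"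
  shows "L * t \<le> 2 * (L + ln 2 - ln L - ln t)"
proof -
  have t2: "2 - t > 0" using assms by simp
  have "ln (L * (2 - t) / 2) \<le> L * (2 - t) / 2 - 1" using assms t2 by (intro ln_le_minus_one) simp
  hence a: "ln L + ln (2 - t) - ln 2 \<le> L * (2 - t) / 2 - 1"
    using assms t2 by (simp add: ln_div ln_mult)
  have e: "exp 1 \<ge> (2718/1000::real)" using abs_le_D2[OF e_approx_32] by simp
  have "t \<le> exp 1 * (2 - t)"
  proof -
    have "t \<le> 2718/1000 * (2 - t)" using assms by simp
    also have "\<dots> \<le> exp 1 * (2 - t)" using e t2 by (intro mult_right_mono) auto
    finally show ?thesis .
  qed
  hence "ln t \<le> ln (exp 1 * (2 - t))" using assms by simp
  hence b: "ln t \<le> 1 + ln (2 - t)" using t2 by (simp add: ln_mult)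
  show ?thesis using a b by (simp add: algebra_simps)
qed

lemma sum_vec_basis: "(\<Sum>b\<in>(Basis :: (real^'n) set). (x::real^'n) \<bullet> b) = (\<Sum>i\<in>UNIV. x $ i)"
proof -
  have "(\<Sum>b\<in>(Basis :: (real^'n) set). x \<bullet> b) = (\<Sum>i\<in>UNIV. x \<bullet> axis i 1)"
  proof -
    have B: "(Basis :: (real^'n) set) = range (\<lambda>i. axis i 1)" unfolding Basis_vec_def by auto
    show ?thesis unfolding B by (subst sum.reindex) (auto simp: inj_on_def axis_eq_axis)
  qed
  thus ?thesis by (simp add: cart_eq_inner_axis)
qed

theorem lemma12:
  fixes b c :: real
  assumes "c > 0"
    and "b + ln c - ln (real CARD('n::finite)) > 1"
  shows "emeasure lborel {x :: real ^ 'n. (\<forall>i. 0 \<le> x $ i) \<and> Rb b x < c}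
     \<le> ennreal (1 / (fact CARD('n) * real CARD('n)) *
          (2 ^ CARD('n) * c ^ CARD('n) / (b + ln c - ln (real CARD('n))) ^ CARD('n)))"
proof -
  define n where "n = CARD('n)"
  define L where "L = b + ln c - ln (real n)"
  define t where "t = root n (real n)"
  define s where "s = 2 * c / (L * t)"
  have n1: "n \<ge> 1" unfolding n_def by (simp add: Suc_leI)
  have L1: "L > 1" using assms(2) unfolding L_def n_def by simp
  have tn: "t ^ n = real n" unfolding t_def using n1 by (simp add: real_root_pow_pos2)
  have t1: "t \<ge> 1" unfolding t_def using n1 by simp
  have t2: "t \<le> 29/20"
  proof -
    have "t \<le> root n ((29/20)^n)" unfolding t_def using n1 pow_bound[OF n1] by simp
    also have "\<dots> = 29/20" using n1 by (simp add: real_root_power_cancel)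
    finally show ?thesis .
  qed
  have s0: "s > 0" unfolding s_def using assms(1) L1 t1 by simp
  define K where "K = ln s - ln n + b"
  have K: "K = L + ln 2 - ln L - ln t"
  proof -
    have "ln s = ln 2 + ln c - ln L - ln t"
      unfolding s_def using assms(1) L1 t1 by (simp add: ln_div ln_mult)
    thus ?thesis unfolding K_def L_def by simp
  qed
  have "L * t \<le> 2 * K" unfolding K using key_ineq[OF _ t1 t2, of L] L1 by simp
  hence sK: "s * K \<ge> c"
    unfolding s_def using assms(1) L1 t1 by (simp add: field_simps)
  have Kpos: "K > 0"
  proof (rule ccontr)
    assume "\<not> K > 0"
    hence "s * K \<le> 0" using s0 by (simp add: mult_nonneg_nonpos)
    thus False using sK assms(1) by simp
  qed
  have sub: "{x :: real ^ 'n. (\<forall>i. 0 \<le> x $ i) \<and> Rb b x < c}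
     \<subseteq> {x::real^'n. (\<forall>i\<in>Basis. 0 \<le> x \<bullet> i) \<and> sum ((\<bullet>) x) Basis \<le> s}"
  proof safe
    fix x :: "real^'n" assume x0: "\<forall>i. 0 \<le> x $ i" and R: "Rb b x < c"
    show "0 \<le> x \<bullet> i" if "i \<in> Basis" for i
      using that x0 by (auto simp: Basis_vec_def cart_eq_inner_axis[symmetric] inner_axis)
    define S where "S = (\<Sum>i\<in>UNIV. x $ i)"
    have S0: "S \<ge> 0" unfolding S_def using x0 by (simp add: sum_nonneg)
    have "S \<le> s"
    proof (rule ccontr)
      assume "\<not> S \<le> s"
      hence Ss: "S > s" by simp
      hence Sp: "S > 0" using s0 by simp
      define a where "a = S / n"
      have a0: "a > 0" unfolding a_def using Sp n1 by simp
      have "(\<Sum>i\<in>UNIV. xlnx (x $ i)) \<ge> (\<Sum>i\<in>UNIV. x $ i * ln a + x $ i - a)"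
        by (intro sum_mono xlnx_bound) (use x0 a0 in auto)
      also have "(\<Sum>i\<in>UNIV. x $ i * ln a + x $ i - a) = S * ln a + S - n * a"
        unfolding S_def n_def by (simp add: sum.distrib sum_subtractf sum_distrib_right)
      also have "\<dots> = S * (ln S - ln n)" unfolding a_def using n1 Sp by (simp add: ln_div)
      finally have "Rb b x \<ge> S * (ln S - ln n + b)" unfolding Rb_def S_def by (simp add: algebra_simps)
      moreover have "S * (ln S - ln n + b) \<ge> S * K"
        unfolding K_def using Ss s0 by (intro mult_left_mono) auto
      moreover have "S * K > s * K" using Ss Kpos by simp
      ultimately show False using R sK by linarith
    qed
    thus "sum ((\<bullet>) x) Basis \<le> s" unfolding S_def sum_vec_basis .
  qed
  have "emeasure lborel {x :: real ^ 'n. (\<forall>i. 0 \<le> x $ i) \<and> Rb b x < c}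
      \<le> emeasure lborel {x::real^'n. (\<forall>i\<in>Basis. 0 \<le> x \<bullet> i) \<and> sum ((\<bullet>) x) Basis \<le> s}"
    by (rule emeasure_mono[OF sub]) simp
  also have "\<dots> = ennreal (s ^ n / fact n)" using simplex_vol[of s, where 'a="real^'n"] s0 unfolding n_def by simp
  also have "s ^ n / fact n = 1 / (fact n * real n) * (2 ^ n * c ^ n / L ^ n)"
    unfolding s_def using tn n1 L1 t1 by (simp add: power_divide power_mult_distrib field_simps)
  finally show ?thesis unfolding n_def L_def .
qed

end
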